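(* Let $m\ge 2$ and let $\mathcal{R}_m^4$ be the rose graph with $N_m=3m+1$ nodes. The partial mean hitting time to the hub node is $$T_{\mathrm H}^{\mathrm T}=\frac{10}{3}$$ for the traditional unbiased random walk (TURW), $$T_{\mathrm H}^{\mathrm B}=\frac43+\frac{2\sqrt{2m-1}}{m}=\frac43+\frac{2\sqrt{6N_m-15}}{N_m-1}$$ for the NBCRW, and $$T_{\mathrm H}^{\mathrm M}=\frac43+\frac{2}{m}=\frac43+\frac{6}{N_m-1}$$ for the MERW.
   Context: The rose graph $\mathcal{R}_m^4$ ($m\ge2$) is obtained by gluing $m$ cycles of length 4 at a single common node, the hub; it has $3m+1$ nodes. Let $\mathbf{A}=(a_{ij})$ be the adjacency matrix and $d_i$ the degrees. TURW: $p_{ij}=a_{ij}/d_i$. MERW: with $\lambda_1$ the largest eigenvalue of $\mathbf{A}$ and $\psi_1$ the positive unit eigenvector, $p_{ij}=\frac{a_{ij}}{\lambda_1}\frac{\psi_{1j}}{\psi_{1i}}$. NBCRW: the non-backtracking matrix $\mathbf{B}$ is indexed by directed edges $i\to j$ (two per undirected edge) with $B_{i\to j,k\to l}=1$ if $j=k$ and $i\ne l$, else $0$; $v$ is a non-negative eigenvector for its leading (Perron–Frobenius) eigenvalue; $x_i=\sum_{j\in\mathcal{N}_i}v_{i\to j}$; and $p_{ij}=a_{ij}x_j/\sum_k a_{ik}x_k$. For a random walk, the hitting time $T_{ij}$ is the expected number of steps to first reach $j$ starting from $i$ ($T_{jj}=0$), and the partial mean hitting time to $j$ is $T_j=\frac{1}{N-1}\sum_{i}T_{ij}$,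 $N$ the number of nodes. *)

theory Defs
  imports Complex_Main
begin

text \<open>Nodes are 0..3m; node 0 is the hub; petal k (k < m) is the 4-cycle
  0 - 3k+1 - 3k+2 - 3k+3 - 0.\<close>

definition rose_nodes :: "nat \<Rightarrow> nat set" where
  "rose_nodes m = {0..3*m}"

definition rose_edge :: "nat \<Rightarrow> nat \<Rightarrow> nat \<Rightarrow> bool" where
  "rose_edge m i j \<longleftrightarrow> (\<exists>k<m. {i,j} = {0, 3*k+1} \<or> {i,j} = {3*k+1, 3*k+2}
      \<or> {i,j} = {3*k+2, 3*k+3} \<or> {i,j} = {3*k+3, 0})"

definition rose_adj :: "nat \<Rightarrow> nat \<Rightarrow> nat \<Rightarrow> real" where
  "rose_adj m i j = (if rose_edge m i j then 1 else 0)"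

definition hub :: nat where "hub = 0"

definition degree :: "'v set \<Rightarrow> ('v \<Rightarrow> 'v \<Rightarrow> real) \<Rightarrow> 'v \<Rightarrow> real" where
  "degree V a i = (\<Sum>k\<in>V. a i k)"

definition real_eigenvalue :: "'v set \<Rightarrow> ('v \<Rightarrow> 'v \<Rightarrow> real) \<Rightarrow> real \<Rightarrow> bool" where
  "real_eigenvalue V M \<mu> \<longleftrightarrow> (\<exists>x. (\<exists>i\<in>V. x i \<noteq> 0) \<and> (\<forall>i\<in>V. (\<Sum>j\<in>V. M i j * x j) = \<mu> * x i))"

definition complex_eigenvalue :: "'v set \<Rightarrow> ('v \<Rightarrow> 'v \<Rightarrow> real) \<Rightarrow> complex \<Rightarrow> bool" where
  "complex_eigenvalue V M \<mu> \<longleftrightarrow> (\<exists>x. (\<exists>i\<in>V. x i \<noteq> 0) \<and>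
      (\<forall>i\<in>V. (\<Sum>j\<in>V. complex_of_real (M i j) * x j) = \<mu> * x i))"

definition largest_eigenvalue :: "'v set \<Rightarrow> ('v \<Rightarrow> 'v \<Rightarrow> real) \<Rightarrow> real" where
  "largest_eigenvalue V M = Max {\<mu>. real_eigenvalue V M \<mu>}"

definition pf_eigenvalue :: "'v set \<Rightarrow> ('v \<Rightarrow> 'v \<Rightarrow> real) \<Rightarrow> real" where
  "pf_eigenvalue V M = Max (cmod ` {\<mu>. complex_eigenvalue V M \<mu>})"

definition turw :: "'v set \<Rightarrow> ('v \<Rightarrow> 'v \<Rightarrow> real) \<Rightarrow> 'v \<Rightarrow> 'v \<Rightarrow> real" where
  "turw V a i j = a i j / degree V a i"

definition merw :: "'v set \<Rightarrow> ('v \<Rightarrow> 'v \<Rightarrow> real) \<Rightarrow> ('v \<Rightarrow> real) \<Rightarrow> 'v \<Rightarrow> 'v \<Rightarrow> real" where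
  "merw V a \<psi> i j = a i j / largest_eigenvalue V a * (\<psi> j / \<psi> i)"

definition dir_edges :: "'v set \<Rightarrow> ('v \<Rightarrow> 'v \<Rightarrow> real) \<Rightarrow> ('v \<times> 'v) set" where
  "dir_edges V a = {(i,j). i \<in> V \<and> j \<in> V \<and> a i j \<noteq> 0}"

definition nb_matrix :: "('v \<times> 'v) \<Rightarrow> ('v \<times> 'v) \<Rightarrow> real" where
  "nb_matrix e f = (if snd e = fst f \<and> fst e \<noteq> snd f then 1 else 0)"

definition nbc_x :: "'v set \<Rightarrow> ('v \<Rightarrow> 'v \<Rightarrow> real) \<Rightarrow> ('v \<times> 'v \<Rightarrow> real) \<Rightarrow> 'v \<Rightarrow> real" where
  "nbc_x V a v i = (\<Sum>j\<in>{j\<in>V. a i j \<noteq> 0}. v (i,j))"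

definition nbcrw :: "'v set \<Rightarrow> ('v \<Rightarrow> 'v \<Rightarrow> real) \<Rightarrow> ('v \<times> 'v \<Rightarrow> real) \<Rightarrow> 'v \<Rightarrow> 'v \<Rightarrow> real" where
  "nbcrw V a v i j = a i j * nbc_x V a v j / (\<Sum>k\<in>V. a i k * nbc_x V a v k)"

text \<open>first_hit V P j i n: probability that the walk with transition matrix P started at i
  first reaches j at step n.\<close>
fun first_hit :: "'v set \<Rightarrow> ('v \<Rightarrow> 'v \<Rightarrow> real) \<Rightarrow> 'v \<Rightarrow> 'v \<Rightarrow> nat \<Rightarrow> real" where
  "first_hit V P j i 0 = (if i = j then 1 else 0)"
| "first_hit V P j i (Suc n) = (if i = j then 0 else (\<Sum>k\<in>V. P i k * first_hit V P j k n))"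

definition hitting_time :: "'v set \<Rightarrow> ('v \<Rightarrow> 'v \<Rightarrow> real) \<Rightarrow> 'v \<Rightarrow> 'v \<Rightarrow> real" where
  "hitting_time V P i j = (\<Sum>n. real n * first_hit V P j i n)"

definition partial_mean_hitting_time :: "'v set \<Rightarrow> ('v \<Rightarrow> 'v \<Rightarrow> real) \<Rightarrow> 'v \<Rightarrow> real" where
  "partial_mean_hitting_time V P j = (\<Sum>i\<in>V. hitting_time V P i j) / (real (card V) - 1)"

end

theory Submission
  imports Defs
begin

definition al :: "real \<Rightarrow> nat \<Rightarrow> real" where
  "al p n = (if odd n then (1-p) * p ^ (n div 2) else 0)"
definition be :: "real \<Rightarrow> nat \<Rightarrow> real" where
  "be p n = (if even n \<and> n \<noteq> 0 then (1-p) * p ^ (n div 2 - 1) else 0)"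

lemma al_0: "al p 0 = 0" by (simp add: al_def)
lemma be_0: "be p 0 = 0" by (simp add: be_def)
lemma al_Suc: "al p (Suc n) = (if n = 0 then 1 - p else 0) + p * be p n"
proof (cases "even n")
  case True
  then obtain k where k: "n = 2*k" by blast
  show ?thesis by (cases k) (auto simp: al_def be_def k)
next
  case False
  then show ?thesis by (auto simp: al_def be_def)
qed
lemma be_Suc: "be p (Suc n) = al p n"
proof (cases "even n")
  case True
  then show ?thesis by (auto simp: al_def be_def)
next
  case False
  then obtain k where k: "n = 2*k+1" using oddE by blast
  show ?thesis by (auto simp: al_def be_def k)
qed

lemma al_sums:
  assumes "0 \<le> p" "p < 1"
  shows "(\<lambda>n. real n * al p n) sums ((1+p)/(1-p))"
proof -
  have g1: "(\<lambda>k. real (Suc k) * p ^ k) sums (1/(1-p)^2)"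
    using geometric_deriv_sums[of p] assms by simp
  have g2: "(\<lambda>k. p ^ k) sums (1/(1-p))"
    using geometric_sums[of p] assms by simp
  have "(\<lambda>k. (1-p) * (2 * (real (Suc k) * p ^ k) - p ^ k)) sums ((1-p) * (2 * (1/(1-p)^2) - 1/(1-p)))"
    by (intro sums_mult sums_diff sums_mult g1 g2)
  moreover have "(1-p) * (2 * (1/(1-p)^2) - 1/(1-p)) = (1+p)/(1-p)"
  proof -
    have ne: "1 - p \<noteq> 0" using assms by simp
    show ?thesis unfolding power2_eq_square using ne by (simp add: divide_simps) (simp add: algebra_simps)
  qed
  ultimately have g: "(\<lambda>k. real (2*k+1) * ((1-p) * p ^ k)) sums ((1+p)/(1-p))"
    by (simp add: algebra_simps)
  have "(\<lambda>n. if even n then (\<lambda>k. 0::real) (n div 2) else (\<lambda>k. real (2*k+1) * ((1-p) * p ^ k)) ((n - 1) div 2)) sums ((1+p)/(1-p) + 0)"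
    by (rule sums_if[OF g sums_zero])
  moreover have "(\<lambda>n. if even n then (\<lambda>k. 0::real) (n div 2) else (\<lambda>k. real (2*k+1) * ((1-p) * p ^ k)) ((n - 1) div 2)) = (\<lambda>n. real n * al p n)"
  proof
    fix n show "(if even n then (\<lambda>k. 0::real) (n div 2) else (\<lambda>k. real (2*k+1) * ((1-p) * p ^ k)) ((n - 1) div 2)) = real n * al p n"
      by (cases "even n") (auto simp: al_def elim!: oddE)
  qed
  ultimately show ?thesis by simp
qed

lemma be_sums:
  assumes "0 \<le> p" "p < 1"
  shows "(\<lambda>n. real n * be p n) sums (2/(1-p))"
proof -
  have g1: "(\<lambda>k. real (Suc k) * p ^ k) sums (1/(1-p)^2)"
    using geometric_deriv_sums[of p] assms by simp
  have "(\<lambda>k. 2 * (1-p) * (real (Suc k) * p ^ k)) sums (2 * (1-p) * (1/(1-p)^2))"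
    by (intro sums_mult g1)
  moreover have "2 * (1-p) * (1/(1-p)^2) = 2/(1-p)"
  proof -
    have ne: "1 - p \<noteq> 0" using assms by simp
    show ?thesis unfolding power2_eq_square using ne by (simp add: divide_simps)
  qed
  ultimately have "(\<lambda>k. (\<lambda>k. real (2*k) * ((1-p) * p ^ (k-1))) (Suc k)) sums (2/(1-p))"
    by (simp add: algebra_simps)
  then have g: "(\<lambda>k. real (2*k) * ((1-p) * p ^ (k-1))) sums (2/(1-p))"
    by (subst (asm) sums_Suc_iff) simp
  have "(\<lambda>n. if even n then (\<lambda>k. real (2*k) * ((1-p) * p ^ (k-1))) (n div 2) else (\<lambda>k. 0::real) ((n - 1) div 2)) sums (0 + 2/(1-p))"
    by (rule sums_if[OF sums_zero g])
  moreover have "(\<lambda>n. if even n then (\<lambda>k. real (2*k) * ((1-p) * p ^ (k-1))) (n div 2) else (\<lambda>k. 0::real) ((n - 1) div 2)) = (\<lambda>n. real n * be p n)"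
  proof
    fix n show "(if even n then (\<lambda>k. real (2*k) * ((1-p) * p ^ (k-1))) (n div 2) else (\<lambda>k. 0::real) ((n - 1) div 2)) = real n * be p n"
      by (cases "even n") (auto simp: be_def elim!: evenE)
  qed
  ultimately show ?thesis by simp
qed

lemma edge_char:
  "rose_edge m i j \<longleftrightarrow>
     (i = 0 \<and> 0 < j \<and> j \<le> 3*m \<and> j mod 3 \<noteq> 2) \<or>
     (j = 0 \<and> 0 < i \<and> i \<le> 3*m \<and> i mod 3 \<noteq> 2) \<or>
     (0 < i \<and> j \<le> 3*m \<and> j = i+1 \<and> i mod 3 \<noteq> 0) \<or>
     (0 < j \<and> i \<le> 3*m \<and> i = j+1 \<and> j mod 3 \<noteq> 0)" (is "_ \<longleftrightarrow> ?R")
proof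
  assume "rose_edge m i j"
  then obtain k where k: "k < m" and
    h: "{i,j} = {0, 3*k+1} \<or> {i,j} = {3*k+1, 3*k+2} \<or> {i,j} = {3*k+2, 3*k+3} \<or> {i,j} = {3*k+3, 0}"
    unfolding rose_edge_def by blast
  have md: "(3*k+1) mod 3 = 1" "(3*k+2) mod 3 = 2" "(3*k+3) mod 3 = 0" by presburger+
  have le: "3*k+3 \<le> 3*m" using k by simp
  from h have "(i,j) \<in> {(0, 3*k+1), (3*k+1, 0), (3*k+1, 3*k+2), (3*k+2, 3*k+1),
      (3*k+2, 3*k+3), (3*k+3, 3*k+2), (3*k+3, 0), (0, 3*k+3)}"
    unfolding doubleton_eq_iff by auto
  then show ?R
  proof (elim insertE)
    assume "(i,j) = (0, 3*k+1)" then show ?R using md le by simp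
  next
    assume "(i,j) = (3*k+1, 0)" then show ?R using md le by simp
  next
    assume "(i,j) = (3*k+1, 3*k+2)" then show ?R using md le by simp
  next
    assume "(i,j) = (3*k+2, 3*k+1)" then show ?R using md le by simp
  next
    assume "(i,j) = (3*k+2, 3*k+3)" then show ?R using md le by simp
  next
    assume "(i,j) = (3*k+3, 3*k+2)" then show ?R using md le by simp
  next
    assume "(i,j) = (3*k+3, 0)" then show ?R using md le by simp
  next
    assume "(i,j) = (0, 3*k+3)" then show ?R using md le by simp
  qed simp
next
  have md: "\<And>k::nat. (3*k+1) mod 3 = 1 \<and> (3*k+2) mod 3 = 2 \<and> (3*k+3) mod 3 = 0" by presburger
  assume H: ?R
  define q where "q = j div 3"
  define r where "r = i div 3"
  have dj: "j = 3*q + j mod 3" by (simp add: q_def)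
  have di: "i = 3*r + i mod 3" by (simp add: r_def)
  have mj: "j mod 3 < 3" and mi: "i mod 3 < 3" by simp_all
  have P: "\<exists>k<m. {i,j} = {0, 3*k+1} \<or> {i,j} = {3*k+1, 3*k+2} \<or> {i,j} = {3*k+2, 3*k+3} \<or> {i,j} = {3*k+3, 0}"
  proof (cases "i = 0")
    case True
    with H have j: "0 < j" "j \<le> 3*m" "j mod 3 \<noteq> 2" by auto
    show ?thesis
    proof (cases "j mod 3 = 1")
      case True
      then have "j = 3*q+1" using dj by simp
      then show ?thesis using j \<open>i=0\<close> by (intro exI[of _ q]) (simp add: doubleton_eq_iff)
    next
      case False
      then have "j mod 3 = 0" using j mj by simp
      then have "j = 3*q" using dj by simp
      then obtain q' where "q = Suc q'" using j by (cases q) auto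
      then have "j = 3*q'+3" using \<open>j = 3*q\<close> by simp
      then show ?thesis using j \<open>i=0\<close> by (intro exI[of _ q']) (simp add: doubleton_eq_iff)
    qed
  next
    case False
    show ?thesis
    proof (cases "j = 0")
      case True
      with H False have j: "0 < i" "i \<le> 3*m" "i mod 3 \<noteq> 2" by auto
      show ?thesis
      proof (cases "i mod 3 = 1")
        case True
        then have "i = 3*r+1" using di by simp
        then show ?thesis using j \<open>j=0\<close> by (intro exI[of _ r]) (simp add: doubleton_eq_iff)
      next
        case False
        then have "i mod 3 = 0" using j mi by simp
        then have "i = 3*r" using di by simp
        then obtain r' where "r = Suc r'" using j by (cases r) auto
        then have "i = 3*r'+3" using \<open>i = 3*r\<close> by simp
        then show ?thesis using j \<open>j=0\<close> by (intro exI[of _ r']) (simp add: doubleton_eq_iff)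
      qed
    next
      case False
      with H \<open>i \<noteq> 0\<close> have "(j \<le> 3*m \<and> j = i+1 \<and> i mod 3 \<noteq> 0) \<or> (i \<le> 3*m \<and> i = j+1 \<and> j mod 3 \<noteq> 0)" by auto
      then show ?thesis
      proof
        assume a: "j \<le> 3*m \<and> j = i+1 \<and> i mod 3 \<noteq> 0"
        show ?thesis
        proof (cases "i mod 3 = 1")
          case True
          then have "i = 3*r+1" using di by simp
          then show ?thesis using a by (intro exI[of _ r]) (simp add: doubleton_eq_iff)
        next
          case False
          then have "i mod 3 = 2" using a mi by linarith
          then have "i = 3*r+2" using di by simp
          then show ?thesis using a by (intro exI[of _ r]) (simp add: doubleton_eq_iff)
        qed
      next
        assume a: "i \<le> 3*m \<and> i = j+1 \<and> j mod 3 \<noteq> 0"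
        show ?thesis
        proof (cases "j mod 3 = 1")
          case True
          then have "j = 3*q+1" using dj by simp
          then show ?thesis using a by (intro exI[of _ q]) (simp add: doubleton_eq_iff)
        next
          case False
          then have "j mod 3 = 2" using a mj by linarith
          then have "j = 3*q+2" using dj by simp
          then show ?thesis using a by (intro exI[of _ q]) (simp add: doubleton_eq_iff)
        qed
      qed
    qed
  qed
  then show "rose_edge m i j" unfolding rose_edge_def .
qed

lemma sum_two:
  assumes "finite V" "x \<in> V" "y \<in> V" "x \<noteq> y" "\<forall>k\<in>V. k \<noteq> x \<longrightarrow> k \<noteq> y \<longrightarrow> g k = 0"
  shows "sum g V = g x + g y"
proof -
  have "sum g V = sum g {x,y}"
    by (rule sum.mono_neutral_left[symmetric]) (use assms in auto)
  then show ?thesis using assms(4) by simp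
qed

lemma mod3_decomp: "(i::nat) = 3 * (i div 3) + i mod 3" by simp
lemma m2_prev: "(i::nat) mod 3 = 2 \<Longrightarrow> (i - 1) mod 3 = 1 \<and> i - 1 \<noteq> 0 \<and> (i+1) mod 3 = 0"
proof -
  assume h: "i mod 3 = 2"
  define q where "q = i div 3"
  have "i = 3*q+2" using mod3_decomp[of i] h q_def by simp
  then show ?thesis by simp
qed
lemma m0_prev: "(i::nat) mod 3 = 0 \<Longrightarrow> i \<noteq> 0 \<Longrightarrow> (i - 1) mod 3 = 2 \<and> i - 1 \<noteq> 0"
proof -
  assume h: "i mod 3 = 0" "i \<noteq> 0"
  define q where "q = i div 3"
  have "i = 3*q" using mod3_decomp[of i] h q_def by simp
  with h have "q \<noteq> 0" by simp
  then obtain r where "q = Suc r" by (cases q) auto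
  with \<open>i = 3*q\<close> have "i - 1 = 3*r+2" by simp
  then show ?thesis by simp presburger
qed
lemma m1_next: "(i::nat) mod 3 = 1 \<Longrightarrow> (i + 1) mod 3 = 2" by presburger

lemma nbr_a: "0 < i \<Longrightarrow> i mod 3 = 1 \<Longrightarrow> rose_edge m i k \<Longrightarrow> k = 0 \<or> k = i+1"
  unfolding edge_char by presburger
lemma nbr_b: "0 < i \<Longrightarrow> i mod 3 = 2 \<Longrightarrow> rose_edge m i k \<Longrightarrow> k = i - 1 \<or> k = i+1"
  unfolding edge_char by presburger
lemma nbr_c: "0 < i \<Longrightarrow> i mod 3 = 0 \<Longrightarrow> rose_edge m i k \<Longrightarrow> k = 0 \<or> k = i - 1"
  unfolding edge_char by presburger

definition Fh :: "real \<Rightarrow> nat \<Rightarrow> nat \<Rightarrow> real" where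
  "Fh p i n = (if i = 0 then (if n = 0 then 1 else 0) else if i mod 3 = 2 then be p n else al p n)"

definition petal_walk :: "nat \<Rightarrow> real \<Rightarrow> (nat \<Rightarrow> nat \<Rightarrow> real) \<Rightarrow> bool" where
  "petal_walk m p P \<longleftrightarrow>
    (\<forall>i k. 0 < i \<longrightarrow> i \<le> 3*m \<longrightarrow> k \<le> 3*m \<longrightarrow> \<not> rose_edge m i k \<longrightarrow> P i k = 0) \<and>
    (\<forall>i. 0 < i \<longrightarrow> i \<le> 3*m \<longrightarrow> i mod 3 = 1 \<longrightarrow> P i 0 = 1 - p \<and> P i (i+1) = p) \<and>
    (\<forall>i. 0 < i \<longrightarrow> i \<le> 3*m \<longrightarrow> i mod 3 = 2 \<longrightarrow> P i (i-1) = 1/2 \<and> P i (i+1) = 1/2) \<and>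
    (\<forall>i. 0 < i \<longrightarrow> i \<le> 3*m \<longrightarrow> i mod 3 = 0 \<longrightarrow> P i 0 = 1 - p \<and> P i (i-1) = p)"

lemma first_hit_Fh:
  assumes pw: "petal_walk m p P" and i: "i \<le> 3*m"
  shows "first_hit {0..3*m} P 0 i n = Fh p i n"
  using i
proof (induction n arbitrary: i)
  case 0
  then show ?case by (simp add: Fh_def al_0 be_0)
next
  case (Suc n)
  note P0 = pw[unfolded petal_walk_def, THEN conjunct1, rule_format]
  note Pa = pw[unfolded petal_walk_def, THEN conjunct2, THEN conjunct1, rule_format]
  note Pb = pw[unfolded petal_walk_def, THEN conjunct2, THEN conjunct2, THEN conjunct1, rule_format]
  note Pc = pw[unfolded petal_walk_def, THEN conjunct2, THEN conjunct2, THEN conjunct2, rule_format]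
  show ?case
  proof (cases "i = 0")
    case True
    then show ?thesis by (simp add: Fh_def)
  next
    case False
    have "first_hit {0..3*m} P 0 i (Suc n) = (\<Sum>k\<in>{0..3*m}. P i k * first_hit {0..3*m} P 0 k n)"
      using False by simp
    also have "\<dots> = (\<Sum>k\<in>{0..3*m}. P i k * Fh p k n)"
      by (rule sum.cong[OF refl]) (simp add: Suc.IH)
    also have "\<dots> = Fh p i (Suc n)"
    proof -
      have "i mod 3 = 1 \<or> i mod 3 = 2 \<or> i mod 3 = 0" by presburger
      then consider "i mod 3 = 1" | "i mod 3 = 2" | "i mod 3 = 0" by (elim disjE) auto
      then show ?thesis
      proof cases
        case 1
        have le: "i + 1 \<le> 3*m" using 1 Suc.prems by presburger
        have "(\<Sum>k\<in>{0..3*m}. P i k * Fh p k n) = P i 0 * Fh p 0 n + P i (i+1) * Fh p (i+1) n"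
          apply (rule sum_two)
          using le 1 False Suc.prems apply auto[4]
          proof (intro ballI impI)
            fix k assume k: "k \<in> {0..3*m}" "k \<noteq> 0" "k \<noteq> i+1"
            then have "\<not> rose_edge m i k" using nbr_a[of i m k] le 1 False Suc.prems by blast
            then have "P i k = 0" using P0[of i k] le 1 False Suc.prems k by auto
            then show "P i k * Fh p k n = 0" by simp
          qed
        also have "\<dots> = Fh p i (Suc n)"
        proof -
          have "(i+1) mod 3 = 2" using 1 by (rule m1_next)
          then show ?thesis using Pa[of i] 1 False Suc.prems by (simp add: Fh_def al_Suc)
        qed
        finally show ?thesis .
      next
        case 2
        have le: "i + 1 \<le> 3*m" using 2 Suc.prems by presburger
        have "(\<Sum>k\<in>{0..3*m}. P i k * Fh p k n) = P i (i-1) * Fh p (i-1) n + P i (i+1) * Fh p (i+1) n"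
          apply (rule sum_two)
          using le 2 False Suc.prems apply auto[4]
          proof (intro ballI impI)
            fix k assume k: "k \<in> {0..3*m}" "k \<noteq> i-1" "k \<noteq> i+1"
            then have "\<not> rose_edge m i k" using nbr_b[of i m k] le 2 False Suc.prems by blast
            then have "P i k = 0" using P0[of i k] le 2 False Suc.prems k by auto
            then show "P i k * Fh p k n = 0" by simp
          qed
        also have "\<dots> = Fh p i (Suc n)"
        proof -
          have "(i - 1) mod 3 = 1" "(i+1) mod 3 = 0" "i - 1 \<noteq> 0" using m2_prev[OF 2] by auto
          then have f: "Fh p (i-1) n = al p n" "Fh p (i+1) n = al p n" "Fh p i (Suc n) = al p n"
            using 2 False by (auto simp: Fh_def be_Suc)
          have e: "P i (i-1) = 1/2" "P i (i+1) = 1/2" using Pb[of i] 2 False Suc.prems by auto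
          show ?thesis by (simp only: e f)
        qed
        finally show ?thesis .
      next
        case 3
        have "(\<Sum>k\<in>{0..3*m}. P i k * Fh p k n) = P i 0 * Fh p 0 n + P i (i-1) * Fh p (i-1) n"
          apply (rule sum_two)
          using 3 False Suc.prems apply auto[4]
          proof (intro ballI impI)
            fix k assume k: "k \<in> {0..3*m}" "k \<noteq> 0" "k \<noteq> i-1"
            then have "\<not> rose_edge m i k" using nbr_c[of i m k] 3 False Suc.prems by blast
            then have "P i k = 0" using P0[of i k] 3 False Suc.prems k by auto
            then show "P i k * Fh p k n = 0" by simp
          qed
        also have "\<dots> = Fh p i (Suc n)"
        proof -
          have "(i - 1) mod 3 = 2" "i - 1 \<noteq> 0" using m0_prev[OF 3 False] by auto
          then show ?thesis using Pc[of i] 3 False Suc.prems by (simp add: Fh_def al_Suc)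
        qed
        finally show ?thesis .
      qed
    qed
    finally show ?thesis .
  qed
qed


definition Tv :: "real \<Rightarrow> nat \<Rightarrow> real" where
  "Tv p i = (if i = 0 then 0 else if i mod 3 = 2 then 2/(1-p) else (1+p)/(1-p))"

lemma hitting_Tv:
  assumes pw: "petal_walk m p P" and p: "0 \<le> p" "p < 1" and i: "i \<le> 3*m"
  shows "hitting_time {0..3*m} P i 0 = Tv p i"
proof -
  have "hitting_time {0..3*m} P i 0 = (\<Sum>n. real n * Fh p i n)"
    unfolding hitting_time_def using first_hit_Fh[OF pw i] by simp
  also have "\<dots> = Tv p i"
  proof (cases "i = 0")
    case True
    then have "(\<lambda>n. real n * Fh p i n) = (\<lambda>n. 0)" by (auto simp: Fh_def)
    then show ?thesis using True by (simp add: Tv_def)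
  next
    case False
    show ?thesis
    proof (cases "i mod 3 = 2")
      case True
      then have "(\<lambda>n. real n * Fh p i n) = (\<lambda>n. real n * be p n)" using False by (auto simp: Fh_def)
      then show ?thesis using True False be_sums[OF p] by (simp add: Tv_def sums_iff)
    next
      case F2: False
      then have "(\<lambda>n. real n * Fh p i n) = (\<lambda>n. real n * al p n)" using False by (auto simp: Fh_def)
      then show ?thesis using F2 False al_sums[OF p] by (simp add: Tv_def sums_iff)
    qed
  qed
  finally show ?thesis .
qed

lemma sum_ab: "(\<Sum>i\<in>{0..3*m}. (if i = 0 then 0 else if i mod 3 = 2 then b else a)) = real m * (2 * a + b)"
proof (induction m)
  case 0
  then show ?case by simp
next
  case (Suc m)
  have e: "3 * Suc m = Suc (Suc (Suc (3*m)))" by simp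
  have m1: "Suc (3*m) mod 3 = 1" and m2: "Suc (Suc (3*m)) mod 3 = 2" and m3: "Suc (Suc (Suc (3*m))) mod 3 = 0"
    by presburger+
  show ?case unfolding e sum.atLeast0_atMost_Suc
    using Suc.IH m1 m2 m3 by (simp add: algebra_simps)
qed

lemma sum_Tv: "(\<Sum>i\<in>{0..3*m}. Tv p i) = real m * (2 * ((1+p)/(1-p)) + 2/(1-p))"
  unfolding Tv_def by (rule sum_ab)

lemma petal_pmht:
  assumes pw: "petal_walk m p P" and p: "0 \<le> p" "p < 1" and m: "m \<ge> 1"
  shows "partial_mean_hitting_time {0..3*m} P 0 = (4 + 2*p) / (3*(1-p))"
proof -
  have "(\<Sum>i\<in>{0..3*m}. hitting_time {0..3*m} P i 0) = (\<Sum>i\<in>{0..3*m}. Tv p i)"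
    by (rule sum.cong[OF refl]) (use hitting_Tv[OF pw p] in auto)
  also have "\<dots> = real m * (2 * ((1+p)/(1-p)) + 2/(1-p))" by (rule sum_Tv)
  finally have s: "(\<Sum>i\<in>{0..3*m}. hitting_time {0..3*m} P i 0) = real m * (2 * ((1+p)/(1-p)) + 2/(1-p))" .
  have c: "real (card {0..3*m}) - 1 = 3 * real m" by simp
  have ne: "1 - p \<noteq> 0" using p by simp
  have mp: "real m \<noteq> 0" using m by simp
  have x: "2 * ((1+p)/(1-p)) + 2/(1-p) = (4 + 2*p)/(1-p)" by (simp add: add_divide_distrib[symmetric] algebra_simps)
  show ?thesis unfolding partial_mean_hitting_time_def s c x
    using ne mp by simp
qed

definition nb1 :: "nat \<Rightarrow> nat" where "nb1 i = (if i mod 3 = 2 then i - 1 else 0)"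
definition nb2 :: "nat \<Rightarrow> nat" where "nb2 i = (if i mod 3 = 0 then i - 1 else i + 1)"

lemma edge_a0: "0 < i \<Longrightarrow> i \<le> 3*m \<Longrightarrow> i mod 3 \<noteq> 2 \<Longrightarrow> rose_edge m i 0 \<and> rose_edge m 0 i"
  unfolding edge_char by simp
lemma edge_up: "0 < i \<Longrightarrow> i + 1 \<le> 3*m \<Longrightarrow> i mod 3 \<noteq> 0 \<Longrightarrow> rose_edge m i (i+1) \<and> rose_edge m (i+1) i"
  unfolding edge_char by simp

lemma nbr_facts:
  assumes "0 < i" "i \<le> 3*m"
  shows "nb1 i \<le> 3*m \<and> nb2 i \<le> 3*m \<and> nb1 i \<noteq> nb2 i \<and> rose_edge m i (nb1 i) \<and> rose_edge m i (nb2 i)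
     \<and> (\<forall>k. rose_edge m i k \<longrightarrow> k = nb1 i \<or> k = nb2 i)"
proof -
  have "i mod 3 = 1 \<or> i mod 3 = 2 \<or> i mod 3 = 0" by presburger
  then consider "i mod 3 = 1" | "i mod 3 = 2" | "i mod 3 = 0" by (elim disjE) auto
  then show ?thesis
  proof cases
    case 1
    have le: "i + 1 \<le> 3*m" using 1 assms by presburger
    have n: "nb1 i = 0" "nb2 i = i+1" using 1 by (auto simp: nb1_def nb2_def)
    have e1: "rose_edge m i 0" using edge_a0[of i m] 1 assms by auto
    have e2: "rose_edge m i (i+1)" using edge_up[of i m] 1 le assms by auto
    show ?thesis unfolding n
    proof (intro conjI allI impI)
      fix k assume "rose_edge m i k" then show "k = 0 \<or> k = i+1" by (rule nbr_a[OF assms(1) 1])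
    qed (use le e1 e2 in simp_all)
  next
    case 2
    have le: "i + 1 \<le> 3*m" using 2 assms by presburger
    have pm: "(i - 1) mod 3 = 1" "i - 1 \<noteq> 0" using m2_prev[OF 2] by auto
    have n: "nb1 i = i - 1" "nb2 i = i+1" using 2 by (auto simp: nb1_def nb2_def)
    have ii: "i - 1 + 1 = i" using assms by simp
    have e1: "rose_edge m i (i - 1)" using edge_up[of "i-1" m] pm assms ii by auto
    have e2: "rose_edge m i (i+1)" using edge_up[of i m] 2 le assms by auto
    show ?thesis unfolding n
    proof (intro conjI allI impI)
      fix k assume "rose_edge m i k" then show "k = i - 1 \<or> k = i+1" by (rule nbr_b[OF assms(1) 2])
    qed (use le e1 e2 assms in simp_all)
  next
    case 3
    have pm: "(i - 1) mod 3 = 2" "i - 1 \<noteq> 0" using m0_prev[OF 3] assms by auto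
    have n: "nb1 i = 0" "nb2 i = i - 1" using 3 by (auto simp: nb1_def nb2_def)
    have ii: "i - 1 + 1 = i" using assms by simp
    have e1: "rose_edge m i 0" using edge_a0[of i m] 3 assms by auto
    have e2: "rose_edge m i (i - 1)" using edge_up[of "i-1" m] pm assms ii by auto
    show ?thesis unfolding n
    proof (intro conjI allI impI)
      fix k assume "rose_edge m i k" then show "k = 0 \<or> k = i - 1" by (rule nbr_c[OF assms(1) 3])
    qed (use e1 e2 assms pm in simp_all)
  qed
qed

lemma adj_sum:
  assumes "0 < i" "i \<le> 3*m"
  shows "(\<Sum>k\<in>{0..3*m}. rose_adj m i k * g k) = g (nb1 i) + g (nb2 i)"
proof -
  note F = nbr_facts[OF assms]
  have "(\<Sum>k\<in>{0..3*m}. rose_adj m i k * g k) = rose_adj m i (nb1 i) * g (nb1 i) + rose_adj m i (nb2 i) * g (nb2 i)"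
    by (rule sum_two) (use F in \<open>auto simp: rose_adj_def\<close>)
  then show ?thesis using F by (simp add: rose_adj_def)
qed

lemma adj_set:
  assumes "0 < i" "i \<le> 3*m"
  shows "{j\<in>{0..3*m}. rose_adj m i j \<noteq> 0} = {nb1 i, nb2 i}"
  using nbr_facts[OF assms] by (auto simp: rose_adj_def)

lemma adj_hub: "rose_adj m 0 k = (if 0 < k \<and> k \<le> 3*m \<and> k mod 3 \<noteq> 2 then 1 else 0)"
  unfolding rose_adj_def edge_char by auto

lemma hub_sum_gen: "(\<Sum>k\<in>{0..3*(m::nat)}. (if 0 < k \<and> k mod 3 \<noteq> 2 then g k else (0::real))) = (\<Sum>q<m. g (3*q+1) + g (3*q+3))"
proof (induction m)
  case 0
  then show ?case by simp
next
  case (Suc m)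
  have e: "3 * Suc m = Suc (Suc (Suc (3*m)))" by simp
  have m1: "Suc (3*m) mod 3 = 1" and m2: "Suc (Suc (3*m)) mod 3 = 2" and m3: "Suc (Suc (Suc (3*m))) mod 3 = 0"
    by presburger+
  have e3: "Suc (Suc (Suc (3*m))) = 3*m+3" by simp
  show ?case unfolding e sum.atLeast0_atMost_Suc sum.lessThan_Suc
    using Suc.IH m1 m2 m3 unfolding e3 by simp
qed

lemma hub_sum: "(\<Sum>k\<in>{0..3*m}. rose_adj m 0 k * g k) = (\<Sum>q<m. g (3*q+1) + g (3*q+3))"
proof -
  have "(\<Sum>k\<in>{0..3*m}. rose_adj m 0 k * g k) = (\<Sum>k\<in>{0..3*m}. (if 0 < k \<and> k mod 3 \<noteq> 2 then g k else 0))"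
    by (rule sum.cong[OF refl]) (auto simp: adj_hub)
  then show ?thesis using hub_sum_gen by simp
qed

lemma adj_zero: "\<not> rose_edge m i k \<Longrightarrow> rose_adj m i k = 0" by (simp add: rose_adj_def)

lemma petal_walk_intro:
  assumes zero: "\<And>i k. 0 < i \<Longrightarrow> i \<le> 3*m \<Longrightarrow> k \<le> 3*m \<Longrightarrow> rose_adj m i k = 0 \<Longrightarrow> P i k = 0"
    and vals: "\<And>q. q < m \<Longrightarrow> P (3*q+1) 0 = 1-p \<and> P (3*q+1) (3*q+2) = p \<and> P (3*q+2) (3*q+1) = 1/2
        \<and> P (3*q+2) (3*q+3) = 1/2 \<and> P (3*q+3) 0 = 1-p \<and> P (3*q+3) (3*q+2) = p"
  shows "petal_walk m p P"
  unfolding petal_walk_def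
proof (intro conjI allI impI)
  fix i k assume "0 < i" "i \<le> 3*m" "k \<le> 3*m" "\<not> rose_edge m i k"
  then show "P i k = 0" using zero adj_zero by blast
next
  fix i assume h: "0 < i" "i \<le> 3*m" "i mod 3 = 1"
  define q where "q = i div 3"
  have i: "i = 3*q+1" using mod3_decomp[of i] h q_def by simp
  have q: "q < m" using h i by simp
  show "P i 0 = 1 - p" "P i (i+1) = p" using vals[OF q] i by (simp_all add: numeral_eq_Suc)
next
  fix i assume h: "0 < i" "i \<le> 3*m" "i mod 3 = 2"
  define q where "q = i div 3"
  have i: "i = 3*q+2" using mod3_decomp[of i] h q_def by simp
  have q: "q < m" using h i by simp
  have i1: "i - 1 = 3*q+1" "i + 1 = 3*q+3" using i by simp_all
  show "P i (i-1) = 1/2" "P i (i+1) = 1/2" unfolding i1 using vals[OF q] i by simp_all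
next
  fix i assume h: "0 < i" "i \<le> 3*m" "i mod 3 = 0"
  define q' where "q' = i div 3"
  have i': "i = 3*q'" using mod3_decomp[of i] h q'_def by simp
  then obtain q where "q' = Suc q" using h by (cases q') auto
  then have i: "i = 3*q+3" using i' by simp
  have q: "q < m" using h i by simp
  have i1: "i - 1 = 3*q+2" using i by simp
  show "P i 0 = 1 - p" "P i (i-1) = p" unfolding i1 using vals[OF q] i by simp_all
qed

lemma petal_nbs:
  "nb1 (3*q+1) = 0 \<and> nb2 (3*q+1) = 3*q+2 \<and> nb1 (3*q+2) = 3*q+1 \<and> nb2 (3*q+2) = 3*q+3
   \<and> nb1 (3*q+3) = 0 \<and> nb2 (3*q+3) = 3*q+2"
proof -
  have "(3*q+1) mod 3 = 1" "(3*q+2) mod 3 = 2" "(3*q+3) mod 3 = 0" by presburger+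
  then show ?thesis by (simp add: nb1_def nb2_def)
qed

lemma adj_nb:
  assumes "0 < i" "i \<le> 3*m"
  shows "rose_adj m i (nb1 i) = 1" "rose_adj m i (nb2 i) = 1"
  using nbr_facts[OF assms] by (simp_all add: rose_adj_def)

lemma turw_pw:
  shows "petal_walk m (1/2) (turw {0..3*m} (rose_adj m))"
proof (rule petal_walk_intro)
  fix i k assume "0 < i" "i \<le> 3*m" "k \<le> 3*m" "rose_adj m i k = 0"
  then show "turw {0..3*m} (rose_adj m) i k = 0" by (simp add: turw_def)
next
  have deg: "degree {0..3*m} (rose_adj m) i = 2" if "0 < i" "i \<le> 3*m" for i
    using adj_sum[OF that, of "\<lambda>_. 1"] adj_nb[OF that] by (simp add: degree_def)
  have T: "turw {0..3*m} (rose_adj m) i (nb1 i) = 1/2 \<and> turw {0..3*m} (rose_adj m) i (nb2 i) = 1/2"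
    if "0 < i" "i \<le> 3*m" for i
    using deg[OF that] adj_nb[OF that] by (simp add: turw_def)
  fix q assume q: "q < m"
  have "3*q+3 \<le> 3*m" using q by simp
  then show "turw {0..3*m} (rose_adj m) (3*q+1) 0 = 1 - 1/2 \<and> turw {0..3*m} (rose_adj m) (3*q+1) (3*q+2) = 1/2 \<and>
    turw {0..3*m} (rose_adj m) (3*q+2) (3*q+1) = 1/2 \<and> turw {0..3*m} (rose_adj m) (3*q+2) (3*q+3) = 1/2 \<and>
    turw {0..3*m} (rose_adj m) (3*q+3) 0 = 1 - 1/2 \<and> turw {0..3*m} (rose_adj m) (3*q+3) (3*q+2) = 1/2"
    using T[of "3*q+1"] T[of "3*q+2"] T[of "3*q+3"] petal_nbs[of q] by simp
qed

lemma turw_result: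
  assumes "m \<ge> 1"
  shows "partial_mean_hitting_time (rose_nodes m) (turw (rose_nodes m) (rose_adj m)) hub = 10/3"
  using petal_pmht[OF turw_pw, of "m"] assms by (simp add: rose_nodes_def hub_def)


lemma merw_result:
  assumes m2: "m \<ge> 2"
    and psi_pos: "\<forall>i\<in>rose_nodes m. \<psi> i > 0"
    and psi_eig: "\<forall>i\<in>rose_nodes m. (\<Sum>j\<in>rose_nodes m. rose_adj m i j * \<psi> j)
                    = largest_eigenvalue (rose_nodes m) (rose_adj m) * \<psi> i"
  shows "partial_mean_hitting_time (rose_nodes m) (merw (rose_nodes m) (rose_adj m) \<psi>) hub = 4/3 + 2 / real m"
proof -
  define L where "L = largest_eigenvalue (rose_nodes m) (rose_adj m)"
  define V where "V = rose_nodes m"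
  have V: "V = {0..3*m}" by (simp add: V_def rose_nodes_def)
  have pos: "\<psi> i > 0" if "i \<le> 3*m" for i using psi_pos that by (auto simp: rose_nodes_def)
  have eq: "\<psi> (nb1 i) + \<psi> (nb2 i) = L * \<psi> i" if "0 < i" "i \<le> 3*m" for i
    using psi_eig adj_sum[OF that, of \<psi>] that by (auto simp: rose_nodes_def L_def)
  have hub: "(\<Sum>q<m. \<psi> (3*q+1) + \<psi> (3*q+3)) = L * \<psi> 0"
    using psi_eig hub_sum[of m \<psi>] by (auto simp: rose_nodes_def L_def)
  have peq: "\<psi> 0 + \<psi> (3*q+2) = L * \<psi> (3*q+1) \<and> \<psi> (3*q+1) + \<psi> (3*q+3) = L * \<psi> (3*q+2)
      \<and> \<psi> 0 + \<psi> (3*q+2) = L * \<psi> (3*q+3)" if "q < m" for q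
  proof -
    have "3*q+3 \<le> 3*m" using that by simp
    then show ?thesis using eq[of "3*q+1"] eq[of "3*q+2"] eq[of "3*q+3"] petal_nbs[of q] by simp
  qed
  have Lpos: "L > 0"
  proof -
    have h0: "0 < m" using m2 by simp
    have "\<psi> 0 + \<psi> (3*0+2) = L * \<psi> (3*0+1)" using peq[OF h0] by (rule conjunct1)
    moreover have "\<psi> 0 > 0" "\<psi> (3*0+2) > 0" "\<psi> (3*0+1) > 0" using pos[of 0] pos[of "3*0+2"] pos[of "3*0+1"] m2 by auto
    ultimately show ?thesis by (metis add_pos_pos mult_le_0_iff not_le order_less_le)
  qed
  have pe: "\<psi> (3*q+3) = \<psi> (3*q+1) \<and> L * \<psi> (3*q+2) = 2 * \<psi> (3*q+1)
     \<and> \<psi> (3*q+1) * (L^2 - 2) = L * \<psi> 0" if "q < m" for q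
  proof -
    define A where "A = \<psi> (3*q+1)"
    define B where "B = \<psi> (3*q+2)"
    define C where "C = \<psi> (3*q+3)"
    define H where "H = \<psi> 0"
    have h1: "H + B = L * A" and h2: "A + C = L * B" and h3: "H + B = L * C"
      using peq[OF that] unfolding A_def B_def C_def H_def by auto
    have "L * C = L * A" using h1 h3 by simp
    then have c: "C = A" using Lpos by simp
    have b: "L * B = 2 * A" using h2 c by simp
    have "L * (L * A) = L * H + L * B" unfolding h1[symmetric] by (simp add: algebra_simps)
    then have "A * (L^2 - 2) = L * H" using b by (simp add: algebra_simps power2_eq_square)
    then show ?thesis using b c unfolding A_def B_def C_def H_def by simp
  qed
  have p0: "\<psi> 0 > 0" using pos by simp
  have L2: "L^2 = 2 * real m + 2"
  proof -
    have s1: "(\<Sum>q<m. \<psi> (3*q+1) + \<psi> (3*q+3)) = (\<Sum>q<m. 2 * \<psi> (3*q+1))"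
    proof (rule sum.cong[OF refl])
      fix q assume "q \<in> {..<m}" then show "\<psi> (3*q+1) + \<psi> (3*q+3) = 2 * \<psi> (3*q+1)" using pe[of q] by auto
    qed
    have "(\<Sum>q<m. \<psi> (3*q+1) + \<psi> (3*q+3)) * (L^2 - 2) = (\<Sum>q<m. 2 * (\<psi> (3*q+1) * (L^2 - 2)))"
      unfolding s1 sum_distrib_right by (simp add: mult.assoc)
    also have "\<dots> = (\<Sum>q<m. 2 * (L * \<psi> 0))"
    proof (rule sum.cong[OF refl])
      fix q assume "q \<in> {..<m}" then show "2 * (\<psi> (3*q+1) * (L^2 - 2)) = 2 * (L * \<psi> 0)" using pe[of q] by auto
    qed
    also have "\<dots> = real m * 2 * (L * \<psi> 0)" by simp
    finally have "L * \<psi> 0 * (L^2 - 2) = L * \<psi> 0 * (2 * real m)" using hub by (simp add: algebra_simps)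
    moreover have "L * \<psi> 0 \<noteq> 0" using Lpos p0 by simp
    ultimately have "L^2 - 2 = 2 * real m" by simp
    then show ?thesis by simp
  qed
  have mpos: "real m > 0" using m2 by simp
  have vals: "merw V (rose_adj m) \<psi> (3*q+1) 0 = 1 - 1/(real m + 1) \<and> merw V (rose_adj m) \<psi> (3*q+1) (3*q+2) = 1/(real m + 1)
     \<and> merw V (rose_adj m) \<psi> (3*q+2) (3*q+1) = 1/2 \<and> merw V (rose_adj m) \<psi> (3*q+2) (3*q+3) = 1/2
     \<and> merw V (rose_adj m) \<psi> (3*q+3) 0 = 1 - 1/(real m + 1) \<and> merw V (rose_adj m) \<psi> (3*q+3) (3*q+2) = 1/(real m + 1)"
    if q: "q < m" for q
  proof -
    have le: "3*q+3 \<le> 3*m" using q by simp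
    have adj: "rose_adj m (3*q+1) 0 = 1" "rose_adj m (3*q+1) (3*q+2) = 1" "rose_adj m (3*q+2) (3*q+1) = 1"
      "rose_adj m (3*q+2) (3*q+3) = 1" "rose_adj m (3*q+3) 0 = 1" "rose_adj m (3*q+3) (3*q+2) = 1"
      using adj_nb[of "3*q+1" m] adj_nb[of "3*q+2" m] adj_nb[of "3*q+3" m] le petal_nbs[of q] by simp_all
    note pq = pe[OF q]
    define a where "a = \<psi> (3*q+1)"
    define b where "b = \<psi> (3*q+2)"
    define h where "h = \<psi> 0"
    have ap: "a > 0" "b > 0" using pos le by (auto simp: a_def b_def)
    have c: "\<psi> (3*q+3) = a" and bb: "L * b = 2 * a" and aa: "a * (L^2 - 2) = L * h"
      using pq by (auto simp: a_def b_def h_def)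
    have aa': "a * (2 * real m) = L * h" using aa L2 by simp
    have Lne: "L \<noteq> 0" using Lpos by simp
    have m1: "real m + 1 \<noteq> 0" using mpos by simp
    have r1: "1 / L * (h / a) = 1 - 1/(real m + 1)"
    proof -
      have "1 / L * (h / a) = (L * h) / (L^2 * a)" using Lne ap by (simp add: field_simps power2_eq_square)
      also have "\<dots> = (a * (2 * real m)) / (a * (2 * real m + 2))" using aa' L2 by (simp add: mult.commute)
      also have "\<dots> = (2 * real m) / (2 * real m + 2)" using ap by simp
      also have "\<dots> = 1 - 1/(real m + 1)" using mpos by (simp add: field_simps)
      finally show ?thesis .
    qed
    have r2: "1 / L * (b / a) = 1/(real m + 1)"
    proof -
      have "1 / L * (b / a) = (L * b) / (L^2 * a)" using Lne ap by (simp add: field_simps power2_eq_square)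
      also have "\<dots> = (a * 2) / (a * (2 * real m + 2))" using bb L2 by (simp add: mult.commute)
      also have "\<dots> = 2 / (2 * real m + 2)" using ap by simp
      also have "\<dots> = 1/(real m + 1)" using mpos by (simp add: field_simps)
      finally show ?thesis .
    qed
    have r3: "1 / L * (a / b) = 1/2"
    proof -
      have "1 / L * (a / b) = a / (L * b)" by simp
      also have "\<dots> = 1/2" using bb ap by simp
      finally show ?thesis .
    qed
    show ?thesis unfolding merw_def adj
      using r1 r2 r3 c ap[unfolded a_def b_def] by (simp add: a_def b_def h_def L_def[symmetric] V_def)
  qed
  have pw: "petal_walk m (1/(real m + 1)) (merw V (rose_adj m) \<psi>)"
  proof (rule petal_walk_intro)
    fix i k assume "0 < i" "i \<le> 3*m" "k \<le> 3*m" "rose_adj m i k = 0"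
    then show "merw V (rose_adj m) \<psi> i k = 0" by (simp add: merw_def)
  next
    fix q assume "q < m" then show "merw V (rose_adj m) \<psi> (3 * q + 1) 0 = 1 - 1 / (real m + 1) \<and>
         merw V (rose_adj m) \<psi> (3 * q + 1) (3 * q + 2) = 1 / (real m + 1) \<and>
         merw V (rose_adj m) \<psi> (3 * q + 2) (3 * q + 1) = 1 / 2 \<and>
         merw V (rose_adj m) \<psi> (3 * q + 2) (3 * q + 3) = 1 / 2 \<and>
         merw V (rose_adj m) \<psi> (3 * q + 3) 0 = 1 - 1 / (real m + 1) \<and>
         merw V (rose_adj m) \<psi> (3 * q + 3) (3 * q + 2) = 1 / (real m + 1)" by (rule vals)
  qed
  have p: "0 \<le> 1/(real m + 1)" "1/(real m + 1) < 1" using mpos by (simp_all add: field_simps)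
  have "partial_mean_hitting_time {0..3*m} (merw V (rose_adj m) \<psi>) 0 = (4 + 2 * (1/(real m + 1))) / (3 * (1 - 1/(real m + 1)))"
    by (rule petal_pmht[OF pw p]) (use m2 in simp)
  also have "\<dots> = 4/3 + 2 / real m"
  proof -
    define x where "x = real m"
    have x: "x > 0" "x + 1 > 0" using mpos by (simp_all add: x_def)
    have d: "1 - 1/(x+1) = x/(x+1)" using x by (simp add: field_simps)
    have n: "4 + 2*(1/(x+1)) = (4*x+6)/(x+1)" using x by (simp add: field_simps)
    have "(4*x+6)/(x+1) / (3*(x/(x+1))) = (4*x+6)/(3*x)"
    proof -
      define y where "y = x + 1"
      have "y > 0" using x by (simp add: y_def)
      then have "(4*x+6)/y / (3*(x/y)) = (4*x+6)/(3*x)" using x by (simp add: field_simps)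
      then show ?thesis by (simp add: y_def)
    qed
    also have "\<dots> = 4/3 + 2/x" using x by (simp add: field_simps)
    finally show ?thesis unfolding x_def[symmetric] d n .
  qed
  finally show ?thesis by (simp add: V rose_nodes_def hub_def V_def)
qed

lemma edge_sym: "rose_edge m i j = rose_edge m j i"
  unfolding rose_edge_def by (simp add: insert_commute)

lemma adj_sym: "rose_adj m i j = rose_adj m j i"
  unfolding rose_adj_def using edge_sym by simp

lemma D_mem: "(i,j) \<in> dir_edges {0..3*m} (rose_adj m) \<longleftrightarrow> i \<le> 3*m \<and> j \<le> 3*m \<and> rose_edge m i j"
  by (simp add: dir_edges_def rose_adj_def)

lemma D_finite: "finite (dir_edges {0..3*m} (rose_adj m))"
proof -
  have "dir_edges {0..3*m} (rose_adj m) \<subseteq> {0..3*m} \<times> {0..3*m}" by (auto simp: dir_edges_def)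
  then show ?thesis by (rule finite_subset) simp
qed

lemma nb_sum:
  assumes j: "j \<le> 3*m"
  shows "(\<Sum>f\<in>dir_edges {0..3*m} (rose_adj m). nb_matrix (i,j) f * v f)
       = (\<Sum>l\<in>{0..3*m}. if rose_adj m j l \<noteq> 0 \<and> l \<noteq> i then v (j,l) else 0)"
proof -
  let ?D = "dir_edges {0..3*m} (rose_adj m)"
  have "(\<Sum>f\<in>?D. nb_matrix (i,j) f * v f) = (\<Sum>f\<in>?D. if fst f = j \<and> snd f \<noteq> i then v f else 0)"
    by (rule sum.cong[OF refl]) (auto simp: nb_matrix_def)
  also have "\<dots> = (\<Sum>f\<in>{f\<in>?D. fst f = j \<and> snd f \<noteq> i}. v f)"
    by (rule sum.inter_filter[symmetric]) (rule D_finite)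
  also have "{f\<in>?D. fst f = j \<and> snd f \<noteq> i} = Pair j ` {l\<in>{0..3*m}. rose_adj m j l \<noteq> 0 \<and> l \<noteq> i}"
    using j by (auto simp: dir_edges_def)
  also have "(\<Sum>f\<in>Pair j ` {l\<in>{0..3*m}. rose_adj m j l \<noteq> 0 \<and> l \<noteq> i}. v f)
      = (\<Sum>l\<in>{l\<in>{0..3*m}. rose_adj m j l \<noteq> 0 \<and> l \<noteq> i}. v (j,l))"
    by (rule sum.reindex_cong[where l = "Pair j"]) (auto simp: inj_on_def)
  also have "\<dots> = (\<Sum>l\<in>{0..3*m}. if rose_adj m j l \<noteq> 0 \<and> l \<noteq> i then v (j,l) else 0)"
    by (rule sum.inter_filter) simp
  finally show ?thesis .
qed

lemma nb_sum_node1: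
  assumes "0 < j" "j \<le> 3*m"
  shows "(\<Sum>l\<in>{0..3*m}. if rose_adj m j l \<noteq> 0 \<and> l \<noteq> nb1 j then v (j,l) else 0) = v (j, nb2 j)"
proof -
  note F = nbr_facts[OF assms]
  have "(\<Sum>l\<in>{0..3*m}. if rose_adj m j l \<noteq> 0 \<and> l \<noteq> nb1 j then v (j,l) else 0)
      = (\<Sum>l\<in>{0..3*m}. if l = nb2 j then v (j, nb2 j) else 0)"
    by (rule sum.cong[OF refl]) (use F in \<open>auto simp: rose_adj_def\<close>)
  also have "\<dots> = v (j, nb2 j)" using F by simp
  finally show ?thesis .
qed

lemma nb_sum_node2:
  assumes "0 < j" "j \<le> 3*m"
  shows "(\<Sum>l\<in>{0..3*m}. if rose_adj m j l \<noteq> 0 \<and> l \<noteq> nb2 j then v (j,l) else 0) = v (j, nb1 j)"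
proof -
  note F = nbr_facts[OF assms]
  have "(\<Sum>l\<in>{0..3*m}. if rose_adj m j l \<noteq> 0 \<and> l \<noteq> nb2 j then v (j,l) else 0)
      = (\<Sum>l\<in>{0..3*m}. if l = nb1 j then v (j, nb1 j) else 0)"
    by (rule sum.cong[OF refl]) (use F in \<open>auto simp: rose_adj_def\<close>)
  also have "\<dots> = v (j, nb1 j)" using F by simp
  finally show ?thesis .
qed

lemma nb_sum_hub:
  assumes "i \<le> 3*m" "rose_adj m 0 i \<noteq> 0"
  shows "(\<Sum>l\<in>{0..3*m}. if rose_adj m 0 l \<noteq> 0 \<and> l \<noteq> i then v (0,l) else 0)
     = (\<Sum>l\<in>{0..3*m}. rose_adj m 0 l * v (0,l)) - v (0,i)"
proof -
  have "(\<Sum>l\<in>{0..3*m}. if rose_adj m 0 l \<noteq> 0 \<and> l \<noteq> i then v (0,l) else 0)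
     = (\<Sum>l\<in>{0..3*m}. rose_adj m 0 l * v (0,l) - (if l = i then v (0,i) else 0))"
    by (rule sum.cong[OF refl]) (use assms in \<open>auto simp: rose_adj_def\<close>)
  also have "\<dots> = (\<Sum>l\<in>{0..3*m}. rose_adj m 0 l * v (0,l)) - v (0,i)"
    using assms by (simp add: sum_subtractf)
  finally show ?thesis .
qed

lemma x_node:
  assumes "0 < j" "j \<le> 3*m"
  shows "nbc_x {0..3*m} (rose_adj m) v j = v (j, nb1 j) + v (j, nb2 j)"
  unfolding nbc_x_def adj_set[OF assms] using nbr_facts[OF assms] by simp

lemma x_hub: "nbc_x {0..3*m} (rose_adj m) v 0 = (\<Sum>l\<in>{0..3*m}. rose_adj m 0 l * v (0,l))"
proof -
  have "nbc_x {0..3*m} (rose_adj m) v 0 = (\<Sum>l\<in>{0..3*m}. if rose_adj m 0 l \<noteq> 0 then v (0,l) else 0)"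
    unfolding nbc_x_def by (rule sum.inter_filter) simp
  also have "\<dots> = (\<Sum>l\<in>{0..3*m}. rose_adj m 0 l * v (0,l))"
    by (rule sum.cong[OF refl]) (auto simp: rose_adj_def)
  finally show ?thesis .
qed

lemma nbcrw_node:
  assumes "0 < i" "i \<le> 3*m"
  shows "nbcrw {0..3*m} (rose_adj m) v i j = rose_adj m i j * nbc_x {0..3*m} (rose_adj m) v j
     / (nbc_x {0..3*m} (rose_adj m) v (nb1 i) + nbc_x {0..3*m} (rose_adj m) v (nb2 i))"
  unfolding nbcrw_def adj_sum[OF assms] ..

lemma petal_edges:
  assumes "q < m"
  shows "(0, 3*q+1) \<in> dir_edges {0..3*m} (rose_adj m) \<and> (3*q+1, 0) \<in> dir_edges {0..3*m} (rose_adj m)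
   \<and> (3*q+1, 3*q+2) \<in> dir_edges {0..3*m} (rose_adj m) \<and> (3*q+2, 3*q+1) \<in> dir_edges {0..3*m} (rose_adj m)
   \<and> (3*q+2, 3*q+3) \<in> dir_edges {0..3*m} (rose_adj m) \<and> (3*q+3, 3*q+2) \<in> dir_edges {0..3*m} (rose_adj m)
   \<and> (3*q+3, 0) \<in> dir_edges {0..3*m} (rose_adj m) \<and> (0, 3*q+3) \<in> dir_edges {0..3*m} (rose_adj m)"
proof -
  have le: "3*q+3 \<le> 3*m" using assms by simp
  have "rose_edge m (3*q+1) 0" "rose_edge m (3*q+1) (3*q+2)" "rose_edge m (3*q+2) (3*q+3)" "rose_edge m (3*q+3) 0"
    using nbr_facts[of "3*q+1" m] nbr_facts[of "3*q+2" m] nbr_facts[of "3*q+3" m] le petal_nbs[of q] by simp_all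
  then show ?thesis using le by (simp add: D_mem edge_sym)
qed

lemma edge_cases:
  assumes "rose_edge m i j"
  obtains q where "q < m" "(i,j) \<in> {(0, 3*q+1), (3*q+1, 0), (3*q+1, 3*q+2), (3*q+2, 3*q+1),
      (3*q+2, 3*q+3), (3*q+3, 3*q+2), (3*q+3, 0), (0, 3*q+3)}"
  using assms unfolding rose_edge_def doubleton_eq_iff by blast

lemma nbcrw_result:
  fixes m :: nat and v :: "nat \<times> nat \<Rightarrow> real"
  assumes m2: "m \<ge> 2"
    and v_nonneg: "\<forall>e\<in>dir_edges (rose_nodes m) (rose_adj m). v e \<ge> 0"
    and v_nonzero: "\<exists>e\<in>dir_edges (rose_nodes m) (rose_adj m). v e \<noteq> 0"
    and v_eig: "\<forall>e\<in>dir_edges (rose_nodes m) (rose_adj m).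
                 (\<Sum>f\<in>dir_edges (rose_nodes m) (rose_adj m). nb_matrix e f * v f)
                 = pf_eigenvalue (dir_edges (rose_nodes m) (rose_adj m)) nb_matrix * v e"
  shows "partial_mean_hitting_time (rose_nodes m) (nbcrw (rose_nodes m) (rose_adj m) v) hub
        = 4/3 + 2 * sqrt (2 * real m - 1) / real m"
proof -
  have RN: "rose_nodes m = {0..3*m}" by (simp add: rose_nodes_def)
  define D where "D = dir_edges {0..3*m} (rose_adj m)"
  define \<mu> where "\<mu> = pf_eigenvalue D nb_matrix"
  define S where "S = (\<Sum>l\<in>{0..3*m}. rose_adj m 0 l * v (0,l))"
  have eig: "(\<Sum>f\<in>D. nb_matrix e f * v f) = \<mu> * v e" if "e \<in> D" for e
    using v_eig that unfolding RN D_def \<mu>_def by blast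
  have nn: "v e \<ge> 0" if "e \<in> D" for e using v_nonneg that unfolding RN D_def by blast
  have eigE: "\<mu> * v (i,j) = (\<Sum>l\<in>{0..3*m}. if rose_adj m j l \<noteq> 0 \<and> l \<noteq> i then v (j,l) else 0)"
    if "(i,j) \<in> D" for i j
    using eig[OF that] nb_sum[of j m i v] that by (simp add: D_def D_mem)
  have node1: "\<mu> * v (nb1 j, j) = v (j, nb2 j)" if "0 < j" "j \<le> 3*m" "(nb1 j, j) \<in> D" for j
    using eigE[OF that(3)] nb_sum_node1[OF that(1,2), of v] by simp
  have node2: "\<mu> * v (nb2 j, j) = v (j, nb1 j)" if "0 < j" "j \<le> 3*m" "(nb2 j, j) \<in> D" for j
    using eigE[OF that(3)] nb_sum_node2[OF that(1,2), of v] by simp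
  have hubE: "\<mu> * v (i, 0) = S - v (0,i)" if "(i,0) \<in> D" for i
  proof -
    have "i \<le> 3*m" "rose_adj m 0 i \<noteq> 0" using that by (auto simp: D_def D_mem rose_adj_def edge_sym)
    then show ?thesis using eigE[OF that] nb_sum_hub[of i m v] by (simp add: S_def)
  qed
  have Shub: "S = (\<Sum>q<m. v (0, 3*q+1) + v (0, 3*q+3))"
    unfolding S_def by (rule hub_sum)
  have E: "v (3*q+1, 3*q+2) = \<mu> * v (0, 3*q+1) \<and> v (3*q+2, 3*q+3) = \<mu> * v (3*q+1, 3*q+2)
     \<and> v (3*q+3, 0) = \<mu> * v (3*q+2, 3*q+3) \<and> S - v (0, 3*q+3) = \<mu> * v (3*q+3, 0)
     \<and> v (3*q+3, 3*q+2) = \<mu> * v (0, 3*q+3) \<and> v (3*q+2, 3*q+1) = \<mu> * v (3*q+3, 3*q+2)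
     \<and> v (3*q+1, 0) = \<mu> * v (3*q+2, 3*q+1) \<and> S - v (0, 3*q+1) = \<mu> * v (3*q+1, 0)" if q: "q < m" for q
  proof -
    have le: "3*q+3 \<le> 3*m" using q by simp
    note pe = petal_edges[OF q, folded D_def]
    note nbs = petal_nbs[of q]
    have "\<mu> * v (nb1 (3*q+1), 3*q+1) = v (3*q+1, nb2 (3*q+1))" using node1[of "3*q+1"] le pe nbs by simp
    moreover have "\<mu> * v (nb1 (3*q+2), 3*q+2) = v (3*q+2, nb2 (3*q+2))" using node1[of "3*q+2"] le pe nbs by simp
    moreover have "\<mu> * v (nb2 (3*q+3), 3*q+3) = v (3*q+3, nb1 (3*q+3))" using node2[of "3*q+3"] le pe nbs by simp
    moreover have "\<mu> * v (nb1 (3*q+3), 3*q+3) = v (3*q+3, nb2 (3*q+3))" using node1[of "3*q+3"] le pe nbs by simp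
    moreover have "\<mu> * v (nb2 (3*q+2), 3*q+2) = v (3*q+2, nb1 (3*q+2))" using node2[of "3*q+2"] le pe nbs by simp
    moreover have "\<mu> * v (nb2 (3*q+1), 3*q+1) = v (3*q+1, nb1 (3*q+1))" using node2[of "3*q+1"] le pe nbs by simp
    moreover have "\<mu> * v (3*q+3, 0) = S - v (0, 3*q+3)" using hubE pe by simp
    moreover have "\<mu> * v (3*q+1, 0) = S - v (0, 3*q+1)" using hubE pe by simp
    ultimately show ?thesis using petal_nbs[of q, simplified] by simp
  qed
  define u where "u q = v (0, 3*q+1)" for q
  define w where "w q = v (0, 3*q+3)" for q
  have chain: "S - w q = \<mu>^4 * u q \<and> S - u q = \<mu>^4 * w q" if q: "q < m" for q
  proof -
    have e: "v (3*q+1, 3*q+2) = \<mu> * v (0, 3*q+1)" "v (3*q+2, 3*q+3) = \<mu> * v (3*q+1, 3*q+2)"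
     "v (3*q+3, 0) = \<mu> * v (3*q+2, 3*q+3)" "S - v (0, 3*q+3) = \<mu> * v (3*q+3, 0)"
     "v (3*q+3, 3*q+2) = \<mu> * v (0, 3*q+3)" "v (3*q+2, 3*q+1) = \<mu> * v (3*q+3, 3*q+2)"
     "v (3*q+1, 0) = \<mu> * v (3*q+2, 3*q+1)" "S - v (0, 3*q+1) = \<mu> * v (3*q+1, 0)"
      using E[OF q] by auto
    have "S - w q = \<mu> * (\<mu> * (\<mu> * (\<mu> * u q)))" unfolding u_def w_def e(4) e(3) e(2) e(1) ..
    moreover have "S - u q = \<mu> * (\<mu> * (\<mu> * (\<mu> * w q)))" unfolding u_def w_def e(8) e(7) e(6) e(5) ..
    ultimately show ?thesis by (simp add: eval_nat_numeral mult.assoc)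
  qed
  have unn: "u q \<ge> 0 \<and> w q \<ge> 0" if "q < m" for q
    using nn petal_edges[OF that, folded D_def] by (simp add: u_def w_def)
  have Suw: "S = (\<Sum>q<m. u q + w q)" using Shub by (simp add: u_def w_def)
  have sumeq: "(2 * real m - 1) * S = \<mu>^4 * S"
  proof -
    have "(\<Sum>q<m. (S - w q) + (S - u q)) = (\<Sum>q<m. 2 * S - (u q + w q))"
      by (rule sum.cong[OF refl]) simp
    also have "\<dots> = 2 * real m * S - S" by (simp add: sum_subtractf Suw[symmetric])
    finally have l: "(\<Sum>q<m. (S - w q) + (S - u q)) = 2 * real m * S - S" .
    have "(\<Sum>q<m. (S - w q) + (S - u q)) = (\<Sum>q<m. \<mu>^4 * (u q + w q))"
      by (rule sum.cong[OF refl]) (use chain in \<open>auto simp: algebra_simps\<close>)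
    also have "\<dots> = \<mu>^4 * S" by (simp add: sum_distrib_left Suw)
    finally show ?thesis using l by (simp add: algebra_simps)
  qed
  have Snz: "S \<noteq> 0"
  proof
    assume S0: "S = 0"
    have z: "u q = 0 \<and> w q = 0" if "q < m" for q
    proof -
      have "(\<Sum>q<m. u q + w q) = 0" using S0 Suw by simp
      then have "\<forall>q\<in>{..<m}. u q + w q = 0" by (subst (asm) sum_nonneg_eq_0_iff) (use unn in auto)
      then have "u q + w q = 0" using that by auto
      then show ?thesis using unn[OF that] by linarith
    qed
    obtain e where e: "e \<in> D" "v e \<noteq> 0" using v_nonzero unfolding RN D_def by blast
    obtain i j where ij: "e = (i,j)" by (cases e)
    have "rose_edge m i j" using e ij by (simp add: D_def D_mem)
    then obtain q where q: "q < m" and cases: "(i,j) \<in> {(0, 3*q+1), (3*q+1, 0), (3*q+1, 3*q+2), (3*q+2, 3*q+1),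
      (3*q+2, 3*q+3), (3*q+3, 3*q+2), (3*q+3, 0), (0, 3*q+3)}" by (rule edge_cases)
    have "v (3*q+1, 3*q+2) = \<mu> * v (0, 3*q+1)" "v (3*q+2, 3*q+3) = \<mu> * v (3*q+1, 3*q+2)"
     "v (3*q+3, 0) = \<mu> * v (3*q+2, 3*q+3)"
     "v (3*q+3, 3*q+2) = \<mu> * v (0, 3*q+3)" "v (3*q+2, 3*q+1) = \<mu> * v (3*q+3, 3*q+2)"
     "v (3*q+1, 0) = \<mu> * v (3*q+2, 3*q+1)"
      using E[OF q] by auto
    moreover have "v (0, 3*q+1) = 0" "v (0, 3*q+3) = 0" using z[OF q] by (auto simp: u_def w_def)
    ultimately have "v (i,j) = 0" using cases by auto
    then show False using e ij by simp
  qed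
  have Sge: "S \<ge> 0" unfolding Suw
  proof (rule sum_nonneg)
    fix q assume "q \<in> {..<m}" then show "0 \<le> u q + w q" using unn[of q] by auto
  qed
  have Sp: "S > 0" using Sge Snz by simp
  have mu4: "\<mu>^4 = 2 * real m - 1" using sumeq Snz by simp
  have mpos: "real m > 0" using m2 by simp
  have uw: "u q = S / (2 * real m) \<and> w q = S / (2 * real m)" if q: "q < m" for q
  proof -
    have c: "S - w q = \<mu>^4 * u q" "S - u q = \<mu>^4 * w q" using chain[OF q] by auto
    have "(\<mu>^4 - 1) * (u q - w q) = 0" using c by (simp add: algebra_simps)
    moreover have "\<mu>^4 - 1 \<noteq> 0" using mu4 m2 by simp
    ultimately have uwe: "u q = w q" by simp
    then have "S = 2 * real m * u q" using c(1) mu4 by (simp add: algebra_simps)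
    then show ?thesis using uwe mpos by (simp add: field_simps)
  qed
  define U where "U = S / (2 * real m)"
  have Upos: "U > 0" using Sp mpos by (simp add: U_def)
  have mupos: "\<mu> > 0"
  proof -
    have q0: "0 < m" using m2 by simp
    have "v (3*0+1, 3*0+2) = \<mu> * v (0, 3*0+1)" using E[OF q0] by blast
    moreover have "v (3*0+1, 3*0+2) \<ge> 0" using nn petal_edges[OF q0, folded D_def] by blast
    moreover have "v (0, 3*0+1) = U" using uw[OF q0] by (simp add: u_def U_def)
    ultimately have "\<mu> \<ge> 0" using Upos by (simp add: zero_le_mult_iff)
    moreover have "\<mu> \<noteq> 0" using mu4 m2 by (auto simp: power_0_left)
    ultimately show ?thesis by simp
  qed
  define s where "s = \<mu>^2"
  have s_sqrt: "s = sqrt (2 * real m - 1)"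
    using real_sqrt_unique[of s "2 * real m - 1"] mu4 by (simp add: s_def power_mult[symmetric])
  have spos: "s > 0" using mupos by (simp add: s_def)
  define X where "X = nbc_x {0..3*m} (rose_adj m) v"
  define P where "P = nbcrw {0..3*m} (rose_adj m) v"
  have X0: "X 0 = 2 * real m * U" using x_hub[of m v] mpos by (simp add: X_def S_def[symmetric] U_def)
  have xdefs: "X (3*q+1) = \<mu> * (\<mu> * (\<mu> * U)) + \<mu> * U \<and> X (3*q+2) = 2 * (s * U) \<and> X (3*q+3) = \<mu> * (\<mu> * (\<mu> * U)) + \<mu> * U"
    if q: "q < m" for q
  proof -
    have le: "3*q+3 \<le> 3*m" using q by simp
    have e: "v (3*q+1, 3*q+2) = \<mu> * v (0, 3*q+1)" "v (3*q+2, 3*q+3) = \<mu> * v (3*q+1, 3*q+2)"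
     "v (3*q+3, 0) = \<mu> * v (3*q+2, 3*q+3)"
     "v (3*q+3, 3*q+2) = \<mu> * v (0, 3*q+3)" "v (3*q+2, 3*q+1) = \<mu> * v (3*q+3, 3*q+2)"
     "v (3*q+1, 0) = \<mu> * v (3*q+2, 3*q+1)"
      using E[OF q] by auto
    have u: "v (0, 3*q+1) = U" "v (0, 3*q+3) = U" using uw[OF q] by (auto simp: u_def w_def U_def)
    have xa: "X (3*q+1) = v (3*q+1, 0) + v (3*q+1, 3*q+2)"
      using x_node[of "3*q+1" m v] le petal_nbs[of q] by (simp add: X_def)
    have xb: "X (3*q+2) = v (3*q+2, 3*q+1) + v (3*q+2, 3*q+3)"
      using x_node[of "3*q+2" m v] le petal_nbs[of q] by (simp add: X_def)
    have xc: "X (3*q+3) = v (3*q+3, 0) + v (3*q+3, 3*q+2)"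
      using x_node[of "3*q+3" m v] le petal_nbs[of q] by (simp add: X_def)
    show ?thesis unfolding xa xb xc e u s_def power2_eq_square by (simp add: algebra_simps)
  qed
  have vals: "P (3*q+1) 0 = 1 - s/(real m + s) \<and> P (3*q+1) (3*q+2) = s/(real m + s) \<and> P (3*q+2) (3*q+1) = 1/2
        \<and> P (3*q+2) (3*q+3) = 1/2 \<and> P (3*q+3) 0 = 1 - s/(real m + s) \<and> P (3*q+3) (3*q+2) = s/(real m + s)"
    if q: "q < m" for q
  proof -
    have le: "3*q+3 \<le> 3*m" using q by simp
    note xd = xdefs[OF q]
    have adj: "rose_adj m (3*q+1) 0 = 1" "rose_adj m (3*q+1) (3*q+2) = 1" "rose_adj m (3*q+2) (3*q+1) = 1"
      "rose_adj m (3*q+2) (3*q+3) = 1" "rose_adj m (3*q+3) 0 = 1" "rose_adj m (3*q+3) (3*q+2) = 1"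
      using adj_nb[of "3*q+1" m] adj_nb[of "3*q+2" m] adj_nb[of "3*q+3" m] le petal_nbs[of q] by simp_all
    have pa: "P (3*q+1) j = rose_adj m (3*q+1) j * X j / (X 0 + X (3*q+2))" for j
      using nbcrw_node[of "3*q+1" m v j] le petal_nbs[of q] by (simp add: P_def X_def)
    have pb: "P (3*q+2) j = rose_adj m (3*q+2) j * X j / (X (3*q+1) + X (3*q+3))" for j
      using nbcrw_node[of "3*q+2" m v j] le petal_nbs[of q] by (simp add: P_def X_def)
    have pc: "P (3*q+3) j = rose_adj m (3*q+3) j * X j / (X 0 + X (3*q+2))" for j
      using nbcrw_node[of "3*q+3" m v j] le petal_nbs[of q] by (simp add: P_def X_def)
    define xa where "xa = \<mu> * (\<mu> * (\<mu> * U)) + \<mu> * U"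
    have xapos: "xa > 0" unfolding xa_def using mupos Upos by (intro add_pos_pos mult_pos_pos) auto
    have ms: "real m + s > 0" using mpos spos by simp
    have r1: "(2 * real m * U) / (2 * real m * U + 2 * (s * U)) = 1 - s/(real m + s)"
    proof -
      have "(2 * real m * U) / (2 * real m * U + 2 * (s * U)) = (U * (2 * real m)) / (U * (2 * (real m + s)))"
        by (simp add: algebra_simps)
      also have "\<dots> = (2 * real m) / (2 * (real m + s))" using Upos by simp
      also have "\<dots> = 1 - s/(real m + s)" using ms by (simp add: field_simps)
      finally show ?thesis .
    qed
    have r2: "(2 * (s * U)) / (2 * real m * U + 2 * (s * U)) = s/(real m + s)"
    proof -
      have "(2 * (s * U)) / (2 * real m * U + 2 * (s * U)) = (U * (2 * s)) / (U * (2 * (real m + s)))"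
        by (simp add: algebra_simps)
      also have "\<dots> = (2 * s) / (2 * (real m + s))" using Upos by simp
      also have "\<dots> = s/(real m + s)" by (rule mult_divide_mult_cancel_left) simp
      finally show ?thesis .
    qed
    have r3: "xa / (xa + xa) = 1/2" using xapos by simp
    have xd1: "X (3*q+1) = xa" and xd2: "X (3*q+2) = 2 * (s * U)" and xd3: "X (3*q+3) = xa"
      using xd by (simp_all add: xa_def)
    show ?thesis
      unfolding pa pb pc adj X0 xd1 xd2 xd3 mult_1_left r1 r2 r3 by simp
  qed
  have pw: "petal_walk m (s/(real m + s)) P"
  proof (rule petal_walk_intro)
    fix i k assume "0 < i" "i \<le> 3*m" "k \<le> 3*m" "rose_adj m i k = 0"
    then show "P i k = 0" by (simp add: P_def nbcrw_def)
  next
    fix q assume "q < m" then show "P (3 * q + 1) 0 = 1 - s / (real m + s) \<and>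
         P (3 * q + 1) (3 * q + 2) = s / (real m + s) \<and>
         P (3 * q + 2) (3 * q + 1) = 1 / 2 \<and>
         P (3 * q + 2) (3 * q + 3) = 1 / 2 \<and>
         P (3 * q + 3) 0 = 1 - s / (real m + s) \<and>
         P (3 * q + 3) (3 * q + 2) = s / (real m + s)" by (rule vals)
  qed
  have ms: "real m + s > 0" using mpos spos by simp
  have p: "0 \<le> s/(real m + s)" "s/(real m + s) < 1" using spos mpos ms by (simp_all add: field_simps)
  have "partial_mean_hitting_time {0..3*m} P 0 = (4 + 2 * (s/(real m + s))) / (3 * (1 - s/(real m + s)))"
    by (rule petal_pmht[OF pw p]) (use m2 in simp)
  also have "\<dots> = 4/3 + 2 * s / real m"
  proof -
    define y where "y = real m + s"
    have y: "y > 0" "y = real m + s" using ms by (simp_all add: y_def)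
    have d: "1 - s/y = real m / y" using y by (simp add: field_simps)
    have n: "4 + 2 * (s/y) = (4 * y + 2 * s) / y" using y by (simp add: field_simps)
    have "(4 * y + 2 * s) / y / (3 * (real m / y)) = (4 * y + 2 * s) / (3 * real m)" using y(1) mpos by (simp add: field_simps)
    also have "\<dots> = (4 * real m + 6 * s) / (3 * real m)" using y(2) by (simp add: algebra_simps)
    also have "\<dots> = 4/3 + 2 * s / real m"
    proof -
      define x where "x = real m"
      have "x > 0" using mpos by (simp add: x_def)
      then have "(4 * x + 6 * s) / (3 * x) = 4/3 + 2 * s / x" by (simp add: field_simps)
      then show ?thesis by (simp add: x_def)
    qed
    finally show ?thesis unfolding y_def[symmetric] d n .
  qed
  finally show ?thesis unfolding RN hub_def P_def s_sqrt .
qed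

theorem theorem6:
  fixes m :: nat and \<psi> :: "nat \<Rightarrow> real" and v :: "nat \<times> nat \<Rightarrow> real"
  assumes m2: "m \<ge> 2"
    and psi_pos: "\<forall>i\<in>rose_nodes m. \<psi> i > 0"
    and psi_eig: "\<forall>i\<in>rose_nodes m. (\<Sum>j\<in>rose_nodes m. rose_adj m i j * \<psi> j)
                    = largest_eigenvalue (rose_nodes m) (rose_adj m) * \<psi> i"
    and psi_unit: "(\<Sum>i\<in>rose_nodes m. (\<psi> i)\<^sup>2) = 1"
    and v_nonneg: "\<forall>e\<in>dir_edges (rose_nodes m) (rose_adj m). v e \<ge> 0"
    and v_nonzero: "\<exists>e\<in>dir_edges (rose_nodes m) (rose_adj m). v e \<noteq> 0"
    and v_eig: "\<forall>e\<in>dir_edges (rose_nodes m) (rose_adj m).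
                 (\<Sum>f\<in>dir_edges (rose_nodes m) (rose_adj m). nb_matrix e f * v f)
                 = pf_eigenvalue (dir_edges (rose_nodes m) (rose_adj m)) nb_matrix * v e"
  shows "partial_mean_hitting_time (rose_nodes m) (turw (rose_nodes m) (rose_adj m)) hub = 10/3
    \<and> partial_mean_hitting_time (rose_nodes m) (nbcrw (rose_nodes m) (rose_adj m) v) hub
        = 4/3 + 2 * sqrt (2 * real m - 1) / real m
    \<and> partial_mean_hitting_time (rose_nodes m) (nbcrw (rose_nodes m) (rose_adj m) v) hub
        = 4/3 + 2 * sqrt (6 * real (3*m+1) - 15) / (real (3*m+1) - 1)
    \<and> partial_mean_hitting_time (rose_nodes m) (merw (rose_nodes m) (rose_adj m) \<psi>) hub
        = 4/3 + 2 / real m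
    \<and> partial_mean_hitting_time (rose_nodes m) (merw (rose_nodes m) (rose_adj m) \<psi>) hub
        = 4/3 + 6 / (real (3*m+1) - 1)"
proof -
  have m1: "m \<ge> 1" using m2 by simp
  have T: "partial_mean_hitting_time (rose_nodes m) (turw (rose_nodes m) (rose_adj m)) hub = 10/3"
    by (rule turw_result[OF m1])
  have N: "partial_mean_hitting_time (rose_nodes m) (nbcrw (rose_nodes m) (rose_adj m) v) hub
        = 4/3 + 2 * sqrt (2 * real m - 1) / real m"
    by (rule nbcrw_result[OF m2 v_nonneg v_nonzero v_eig])
  have M: "partial_mean_hitting_time (rose_nodes m) (merw (rose_nodes m) (rose_adj m) \<psi>) hub = 4/3 + 2 / real m"
    by (rule merw_result[OF m2 psi_pos psi_eig])
  have sq: "sqrt (6 * real (3*m+1) - 15) = 3 * sqrt (2 * real m - 1)"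
  proof -
    have e: "6 * real (3*m+1) - 15 = 9 * (2 * real m - 1)" by simp
    have "sqrt (6 * real (3*m+1) - 15) = sqrt (9 * (2 * real m - 1))" unfolding e ..
    also have "\<dots> = sqrt 9 * sqrt (2 * real m - 1)" by (rule real_sqrt_mult)
    also have "sqrt 9 = (3::real)" by (rule real_sqrt_unique) simp_all
    finally show ?thesis .
  qed
  have d: "real (3*m+1) - 1 = 3 * real m" by simp
  have mpos: "real m > 0" using m2 by simp
  have N2: "4/3 + 2 * sqrt (2 * real m - 1) / real m = 4/3 + 2 * sqrt (6 * real (3*m+1) - 15) / (real (3*m+1) - 1)"
    unfolding sq d using mpos by simp
  have M2: "4/3 + 2 / real m = 4/3 + 6 / (real (3*m+1) - 1)"
    unfolding d using mpos by simp
  show ?thesis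
    by (intro conjI T N M trans[OF N N2] trans[OF M M2])
qed

end
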